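(* (i) For every finite family $(a_i)_{i\in I}$ in $L$, $|\langle\bigoplus_{i\in I}a_i\rangle_0|\ge|\langle\bigoplus_{i\in I}a_i\rangle_=|\ge|\langle\bigoplus_{i\in I}a_i\rangle^+_-|$, and $|\langle\bigoplus_{i\in I}a_i\rangle^+_-|\le|\langle\bigoplus_{i\in I}a_i\rangle|$ for every computation rule $\langle\cdot\rangle$. (ii) $\mathcal{O}_{\langle\cdot\rangle_0}\subseteq\mathcal{O}_{\langle\cdot\rangle_=}\subseteq\mathcal{O}_{\langle\cdot\rangle^+_-}$.
   Context: Let $(L^+,\le)$ be a totally ordered set with bottom $\mathbb{O}$ and top $\mathbb{1}$. Let $L^-=\{-a:a\in L^+\}$ be a disjoint copy with reversed order, $L=L^+\cup L^-$ with $-\mathbb{O}=\mathbb{O}$, totally ordered with $L^-$ below $L^+$; $-(-a)=a$; $|a|=a$ on $L^+$, $|a|=-a$ on $L^-$. Symmetric maximum: $a\oplus b=\mathbb{O}$ if $b=-a$, otherwise the one of $a,b$ with larger absolute value. A finite family $(a_i)_{i\in I}$ fulfills associativity if $|I|\le2$ or $\bigvee_i a_i\ne-\bigwedge_i a_i$; then $\bigoplus_{i\in I}a_i$ is independent of parenthesization (empty $\oplus$ is $\mathbb{O}$). A computation rule $\langle\cdot\rangle$ assigns to every finite family a set $J\subseteq I$ of deleted indices such that $(a_i)_{i\in I\setminus J}$ fulfills associativity and such that the deletion is the result of a suitable arrangement of parentheses in $\bigoplus_{i\in I}a_i$; $\langle\bigoplus_{i\in I}a_i\rangle:=\bigoplus_{i\in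 I\setminus J}a_i$. The cancelling set $\mathcal{O}_{\langle\cdot\rangle}$ is the set of finite families with $\langle\bigoplus a_i\rangle=\mathbb{O}$. Splitting rule $\langle\cdot\rangle^+_-$: deletes nothing if the family fulfills associativity, everything otherwise. Weak rule $\langle\cdot\rangle_=$: repeatedly deletes all occurrences of $a$ and of $-a$, where $a=\bigvee a_i=-\bigwedge a_i$ in the current family, until associativity holds. Strong rule $\langle\cdot\rangle_0$: repeatedly deletes one occurrence of $a$ and one of $-a$ ($a=\bigvee a_i=-\bigwedge a_i$ in the current family) until associativity holds. *)

theory Defs
  imports Main "HOL-Library.Multiset"
begin

section \<open>The symmetrized chain L = L+ \<union> L-\<close>

text \<open>L+ is modelled by a linearly ordered type 'a with bottom (bot) and top (top).
  Pos a is the element a of L+, Neg a is the element -a of L-.  Since -O = O,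
  the raw value Neg bot is not an element of L; the carrier is Lcar.\<close>

datatype 'a sym = Pos 'a | Neg 'a

definition Lcar :: "('a::order_bot) sym set" where
  "Lcar = {x. x \<noteq> Neg bot}"

fun sym_le :: "('a::linorder) sym \<Rightarrow> 'a sym \<Rightarrow> bool" where
  "sym_le (Neg a) (Neg b) = (b \<le> a)"
| "sym_le (Neg a) (Pos b) = True"
| "sym_le (Pos a) (Neg b) = False"
| "sym_le (Pos a) (Pos b) = (a \<le> b)"

instantiation sym :: (linorder) linorder
begin
definition less_eq_sym_def: "x \<le> y \<longleftrightarrow> sym_le x y"
definition less_sym_def: "(x::'a sym) < y \<longleftrightarrow> sym_le x y \<and> \<not> sym_le y x"
instance
proof
  fix x y z :: "'a sym"
  show "(x < y) = (x \<le> y \<and> \<not> y \<le> x)" by (simp add: less_eq_sym_def less_sym_def)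
  show "x \<le> x" by (cases x) (auto simp: less_eq_sym_def)
  show "x \<le> y \<Longrightarrow> y \<le> z \<Longrightarrow> x \<le> z"
    by (cases x; cases y; cases z) (auto simp: less_eq_sym_def)
  show "x \<le> y \<Longrightarrow> y \<le> x \<Longrightarrow> x = y"
    by (cases x; cases y) (auto simp: less_eq_sym_def)
  show "x \<le> y \<or> y \<le> x"
    by (cases x; cases y) (auto simp: less_eq_sym_def)
qed
end

abbreviation zeroL :: "('a::order_bot) sym" where "zeroL \<equiv> Pos bot"

fun negL :: "('a::order_bot) sym \<Rightarrow> 'a sym" where
  "negL (Pos a) = (if a = bot then Pos bot else Neg a)"
| "negL (Neg a) = Pos a"

fun absL :: "'a sym \<Rightarrow> 'a sym" where
  "absL (Pos a) = Pos a"
| "absL (Neg a) = Pos a"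

definition smax :: "('a::{linorder,order_bot}) sym \<Rightarrow> 'a sym \<Rightarrow> 'a sym" where
  "smax a b = (if b = negL a then zeroL else if absL b \<le> absL a then a else b)"

section \<open>Finite families (as lists), associativity, and the big symmetric maximum\<close>

definition fulfills_assoc :: "('a::{linorder,order_bot}) sym list \<Rightarrow> bool" where
  "fulfills_assoc xs \<longleftrightarrow> length xs \<le> 2 \<or> Max (set xs) \<noteq> negL (Min (set xs))"

text \<open>Big symmetric maximum (meaningful for families fulfilling associativity);
  the empty family gives O.\<close>
definition bigsmax :: "('a::{linorder,order_bot}) sym list \<Rightarrow> 'a sym" where
  "bigsmax xs = foldr smax xs zeroL"

text \<open>Arrangements of parentheses: full binary bracketings of the family
  (in any order of the terms, as the family is unordered).\<close>
datatype 'b btree = Leaf 'b | Node "'b btree" "'b btree"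

fun leaves :: "'b btree \<Rightarrow> 'b list" where
  "leaves (Leaf x) = [x]"
| "leaves (Node l r) = leaves l @ leaves r"

fun evalT :: "('a::{linorder,order_bot}) sym btree \<Rightarrow> 'a sym" where
  "evalT (Leaf x) = x"
| "evalT (Node l r) = smax (evalT l) (evalT r)"

definition bracket_values :: "('a::{linorder,order_bot}) sym list \<Rightarrow> 'a sym set" where
  "bracket_values xs =
     {evalT t | t. mset (leaves t) = mset xs} \<union> (if xs = [] then {zeroL} else {})"

definition kept :: "'b list \<Rightarrow> nat set \<Rightarrow> 'b list" where
  "kept xs J = nths xs ({..<length xs} - J)"

definition comp_rule :: "(('a::{linorder,order_bot}) sym list \<Rightarrow> nat set) \<Rightarrow> bool" where
  "comp_rule R \<longleftrightarrow> (\<forall>xs. set xs \<subseteq> Lcar \<longrightarrow>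
      R xs \<subseteq> {..<length xs} \<and>
      fulfills_assoc (kept xs (R xs)) \<and>
      bigsmax (kept xs (R xs)) \<in> bracket_values xs)"

definition rule_value :: "(('a::{linorder,order_bot}) sym list \<Rightarrow> nat set) \<Rightarrow> 'a sym list \<Rightarrow> 'a sym" where
  "rule_value R xs = bigsmax (kept xs (R xs))"

definition split_rule :: "('a::{linorder,order_bot}) sym list \<Rightarrow> 'a sym" where
  "split_rule xs = (if fulfills_assoc xs then bigsmax xs else zeroL)"

lemma nonassoc_nonempty: "\<not> fulfills_assoc xs \<Longrightarrow> xs \<noteq> []"
  by (auto simp: fulfills_assoc_def)

function weak_rule :: "('a::{linorder,order_bot}) sym list \<Rightarrow> 'a sym" where
  "weak_rule xs = (if fulfills_assoc xs then bigsmax xs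
     else (let a = Max (set xs) in weak_rule (filter (\<lambda>x. x \<noteq> a \<and> x \<noteq> negL a) xs)))"
  by pat_completeness auto
termination
proof (relation "measure length")
  fix xs :: "'a sym list" and a
  assume "\<not> fulfills_assoc xs" "a = Max (set xs)"
  then have "a \<in> set xs" using nonassoc_nonempty[of xs] by (simp add: Max_in)
  then show "(filter (\<lambda>x. x \<noteq> a \<and> x \<noteq> negL a) xs, xs) \<in> measure length"
    by (auto intro: length_filter_less)
qed simp

function strong_rule :: "('a::{linorder,order_bot}) sym list \<Rightarrow> 'a sym" where
  "strong_rule xs = (if fulfills_assoc xs then bigsmax xs
     else (let a = Max (set xs) in strong_rule (remove1 (negL a) (remove1 a xs))))"
  by pat_completeness auto
termination
proof (relation "measure length")
  fix xs :: "'a sym list" and a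
  assume "\<not> fulfills_assoc xs" "a = Max (set xs)"
  then have "a \<in> set xs" using nonassoc_nonempty[of xs] by (simp add: Max_in)
  then have "length (remove1 a xs) < length xs" using length_pos_if_in_set[of a xs] by (simp add: length_remove1)
  moreover have "length (remove1 (negL a) (remove1 a xs)) \<le> length (remove1 a xs)"
    by (simp add: length_remove1 diff_le_mono2)
  ultimately show "(remove1 (negL a) (remove1 a xs), xs) \<in> measure length" by simp
qed simp

definition cancelling_set :: "(('a::{linorder,order_bot}) sym list \<Rightarrow> 'a sym) \<Rightarrow> 'a sym list set" where
  "cancelling_set f = {xs. set xs \<subseteq> Lcar \<and> f xs = zeroL}"

end

theory Submission
  imports Defs
begin

declare weak_rule.simps[simp del] strong_rule.simps[simp del]

fun lev :: "'a sym \<Rightarrow> 'a" where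
  "lev (Pos a) = a" | "lev (Neg a) = a"

lemma abs_le_lev: "(absL x \<le> absL y) = (lev x \<le> lev y)"
  by (cases x; cases y) (auto simp: less_eq_sym_def)

lemma absL_lev: "absL x = Pos (lev x)"
  by (cases x) auto

lemma Lcar_iff: "x \<in> Lcar \<longleftrightarrow> x \<noteq> Neg bot"
  by (simp add: Lcar_def)

lemma negL_negL: "(x::'a::{linorder,order_bot} sym) \<in> Lcar \<Longrightarrow> negL (negL x) = x"
  by (cases x) (auto simp: Lcar_iff)

lemma negL_zero: "(x::'a::{linorder,order_bot} sym) \<in> Lcar \<Longrightarrow> negL x = zeroL \<Longrightarrow> x = zeroL"
  by (cases x) (auto simp: Lcar_iff split: if_splits)

lemma lev_negL: "lev (negL (x::'a::{linorder,order_bot} sym)) = lev x"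
  by (cases x) auto

lemma smax_in: "smax u v \<in> {u, v, zeroL}"
  by (auto simp: smax_def)

lemma foldr_in: "foldr smax ys zeroL \<in> set ys \<union> {zeroL}"
  by (induction ys) (use smax_in in fastforce)+

lemma bigsmax_in: "bigsmax ys \<in> set ys \<union> {zeroL}"
  unfolding bigsmax_def by (rule foldr_in)

lemma weak_in: "weak_rule xs \<in> set xs \<union> {zeroL}"
proof (induction xs rule: weak_rule.induct)
  case (1 xs)
  show ?case
  proof (cases "fulfills_assoc xs")
    case True
    then show ?thesis using bigsmax_in[of xs] by (subst weak_rule.simps) simp
  next
    case False
    then show ?thesis using 1[OF False refl] by (subst weak_rule.simps) (auto simp: Let_def)
  qed
qed

definition dom :: "('a::linorder) sym \<Rightarrow> 'a sym set \<Rightarrow> bool" where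
  "dom x S \<longleftrightarrow> (\<forall>y\<in>S. lev y \<le> lev x \<and> (lev y = lev x \<longrightarrow> y = x))"

lemma lev_bot: "(x::'a::{linorder,order_bot} sym) \<in> Lcar \<Longrightarrow> lev x = bot \<Longrightarrow> x = zeroL"
  by (cases x) (auto simp: Lcar_iff)

lemma smax_dom:
  fixes x :: "'a::{linorder,order_bot} sym"
  assumes "x \<in> Lcar" "S \<subseteq> Lcar" "dom x S" "v \<in> S \<union> {zeroL}"
  shows "smax x v = x \<and> smax v x = x"
proof -
  have vL: "v \<in> Lcar" using assms by (auto simp: Lcar_iff)
  have A: "lev v \<le> lev x" "lev v = lev x \<Longrightarrow> v = x"
    using assms lev_bot[OF assms(1)] by (auto simp: dom_def)
  have B: "v = negL x \<Longrightarrow> v = x"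
    using A lev_negL[of x] by auto
  have C: "x = negL v \<Longrightarrow> v = x"
    using A lev_negL[of v] by auto
  have D: "x = negL x \<Longrightarrow> x = zeroL"
    using negL_zero[OF assms(1)] by (cases x) (auto split: if_splits)
  show ?thesis
    using A B C D by (auto simp: smax_def abs_le_lev)
qed

lemma foldr_dom:
  fixes x :: "'a::{linorder,order_bot} sym"
  assumes "x \<in> set ys" "set ys \<subseteq> S" "x \<in> Lcar" "S \<subseteq> Lcar" "dom x S"
  shows "foldr smax ys zeroL = x"
  using assms(1,2)
proof (induction ys)
  case Nil then show ?case by simp
next
  case (Cons y ys)
  show ?case
  proof (cases "x \<in> set ys")
    case True
    then have "foldr smax ys zeroL = x" using Cons by auto
    moreover have "y \<in> S" using Cons by auto
    ultimately show ?thesis using smax_dom[OF assms(3,4,5), of y] by simp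
  next
    case False
    then have "y = x" using Cons by auto
    moreover have "foldr smax ys zeroL \<in> S \<union> {zeroL}" using foldr_in[of ys] Cons by auto
    ultimately show ?thesis using smax_dom[OF assms(3,4,5)] by simp
  qed
qed

lemma evalT_in: "evalT t \<in> set (leaves t) \<union> {zeroL}"
proof (induction t)
  case (Node t1 t2)
  then show ?case using smax_in[of "evalT t1" "evalT t2"] by auto
qed simp

lemma tree_dom:
  fixes x :: "'a::{linorder,order_bot} sym"
  assumes "x \<in> set (leaves t)" "set (leaves t) \<subseteq> S" "x \<in> Lcar" "S \<subseteq> Lcar" "dom x S"
  shows "evalT t = x"
  using assms(1,2)
proof (induction t)
  case (Leaf y) then show ?case by simp
next
  case (Node l r)
  show ?case
  proof (cases "x \<in> set (leaves l)")
    case True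
    then have "evalT l = x" using Node by auto
    moreover have "evalT r \<in> S \<union> {zeroL}" using evalT_in[of r] Node by auto
    ultimately show ?thesis using smax_dom[OF assms(3,4,5)] by simp
  next
    case False
    then have "evalT r = x" using Node by auto
    moreover have "evalT l \<in> S \<union> {zeroL}" using evalT_in[of l] Node by auto
    ultimately show ?thesis using smax_dom[OF assms(3,4,5)] by simp
  qed
qed

definition filt :: "'a \<Rightarrow> 'a sym list \<Rightarrow> 'a sym list" where
  "filt c ys = filter (\<lambda>x. lev x \<noteq> c) ys"

lemma L0:
  fixes ys :: "'a::{linorder,order_bot} sym list"
  assumes "set ys \<subseteq> Lcar"
  shows "filter (\<lambda>x. x \<noteq> a \<and> x \<noteq> negL a) ys = filt (lev a) ys"
  unfolding filt_def
proof (rule filter_cong[OF refl])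
  fix x assume "x \<in> set ys"
  then have "x \<noteq> Neg bot" using assms by (auto simp: Lcar_iff)
  then show "(x \<noteq> a \<and> x \<noteq> negL a) = (lev x \<noteq> lev a)"
    by (cases x; cases a) auto
qed

lemma filt_remove1: "lev z = c \<Longrightarrow> filt c (remove1 z l) = filt c l"
  by (induction l) (auto simp: filt_def)

lemma le_Pos: "lev y \<le> c \<Longrightarrow> y \<le> Pos c"
  by (cases y) (auto simp: less_eq_sym_def)

lemma Neg_le: "lev y \<le> c \<Longrightarrow> Neg c \<le> y"
  by (cases y) (auto simp: less_eq_sym_def)

lemma dom_cases:
  fixes ys :: "'a::{linorder,order_bot} sym list"
  assumes "set ys \<subseteq> Lcar" "\<forall>y\<in>set ys. lev y \<le> c" "y0 \<in> set ys" "lev y0 = c"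
  shows "(\<exists>x\<in>set ys. dom x (set ys)) \<or> (c \<noteq> bot \<and> Pos c \<in> set ys \<and> Neg c \<in> set ys)"
proof (cases "c \<noteq> bot \<and> Pos c \<in> set ys \<and> Neg c \<in> set ys")
  case True then show ?thesis by blast
next
  case False
  have y0: "y0 = Pos c \<or> y0 = Neg c" using assms(4) by (cases y0) auto
  show ?thesis
  proof (cases "Pos c \<in> set ys")
    case True
    have "dom (Pos c) (set ys)"
      unfolding dom_def
    proof
      fix y assume y: "y \<in> set ys"
      then have "y \<noteq> Neg bot" using assms(1) by (auto simp: Lcar_iff)
      then show "lev y \<le> lev (Pos c) \<and> (lev y = lev (Pos c) \<longrightarrow> y = Pos c)"
        using assms(2) y False True by (cases y) auto
    qed
    then show ?thesis using True by blast
  next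
    case PF: False
    then have N: "Neg c \<in> set ys" using y0 assms(3) by auto
    have "dom (Neg c) (set ys)"
      unfolding dom_def
    proof
      fix y assume y: "y \<in> set ys"
      have "y = Pos (lev y) \<or> y = Neg (lev y)" by (cases y) auto
      then show "lev y \<le> lev (Neg c) \<and> (lev y = lev (Neg c) \<longrightarrow> y = Neg c)"
        using assms(2) y PF by auto
    qed
    then show ?thesis using N by blast
  qed
qed

lemma both_MaxMin:
  fixes ys :: "'a::{linorder,order_bot} sym list"
  assumes "\<forall>y\<in>set ys. lev y \<le> c" "Pos c \<in> set ys" "Neg c \<in> set ys" "c \<noteq> bot"
  shows "\<not> fulfills_assoc ys \<or> (set ys = {Pos c, Neg c} \<and> length ys = 2)"
proof -
  have M: "Max (set ys) = Pos c"
    by (rule Max_eqI) (use assms le_Pos in auto)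
  have m: "Min (set ys) = Neg c"
    by (rule Min_eqI) (use assms Neg_le in auto)
  have "Max (set ys) = negL (Min (set ys))" using M m by simp
  moreover
  have "length ys \<le> 2 \<Longrightarrow> set ys = {Pos c, Neg c}"
  proof -
    assume l: "length ys \<le> 2"
    have "card (set ys) \<le> 2" using card_length[of ys] l by linarith
    moreover have sub: "{Pos c, Neg c} \<subseteq> set ys" using assms by auto
    moreover have "card {Pos c, Neg c} = 2" by simp
    moreover have "card {Pos c, Neg c} \<le> card (set ys)" by (rule card_mono[OF finite_set sub])
    ultimately have "card {Pos c, Neg c} = card (set ys)" by linarith
    then show ?thesis using card_subset_eq[OF finite_set sub] by simp
  qed
  moreover have "set ys = {Pos c, Neg c} \<Longrightarrow> length ys \<ge> 2"
    using card_length[of ys] assms(4) by simp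
  ultimately show ?thesis by (auto simp: fulfills_assoc_def)
qed

lemma levels_bounded:
  fixes xs :: "'a::{linorder,order_bot} sym list"
  assumes "set xs \<subseteq> Lcar" "xs \<noteq> []" "Max (set xs) = negL (Min (set xs))" "x \<in> set xs"
  shows "lev x \<le> lev (Max (set xs))"
proof -
  have le1: "x \<le> Max (set xs)" using Max_ge[OF finite_set assms(4)] .
  have le2: "Min (set xs) \<le> x" using Min_le[OF finite_set assms(4)] .
  have mL: "Min (set xs) \<in> Lcar" using assms Min_in[of "set xs"] by auto
  have xL: "x \<noteq> Neg bot" using assms by (auto simp: Lcar_iff)
  have m: "Min (set xs) = negL (Max (set xs))" using negL_negL[OF mL] assms(3) by simp
  show ?thesis
  proof (cases "Max (set xs)")
    case (Pos b)
    then show ?thesis using le1 le2 m xL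
      by (cases x) (auto simp: less_eq_sym_def split: if_splits)
  next
    case (Neg b)
    then show ?thesis using le1 le2 m
      by (cases x) (auto simp: less_eq_sym_def)
  qed
qed

lemma weak_nonassoc:
  "\<not> fulfills_assoc xs \<Longrightarrow> weak_rule xs = weak_rule (filter (\<lambda>x. x \<noteq> Max (set xs) \<and> x \<noteq> negL (Max (set xs))) xs)"
  by (subst weak_rule.simps) (simp add: Let_def)

lemma weak_assoc: "fulfills_assoc xs \<Longrightarrow> weak_rule xs = bigsmax xs"
  by (subst weak_rule.simps) simp

lemma strong_nonassoc:
  "\<not> fulfills_assoc xs \<Longrightarrow> strong_rule xs = strong_rule (remove1 (negL (Max (set xs))) (remove1 (Max (set xs)) xs))"
  by (subst strong_rule.simps) (simp add: Let_def)

lemma strong_assoc: "fulfills_assoc xs \<Longrightarrow> strong_rule xs = bigsmax xs"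
  by (subst strong_rule.simps) simp

lemma weak_nil: "weak_rule [] = zeroL"
  by (simp add: weak_assoc fulfills_assoc_def bigsmax_def)

lemma lev_weak_le:
  assumes "\<forall>y\<in>set ys. lev y \<le> c"
  shows "lev (weak_rule ys) \<le> c"
  using weak_in[of ys] assms by auto

lemma W2:
  fixes ys :: "'a::{linorder,order_bot} sym list"
  assumes L: "set ys \<subseteq> Lcar" and B: "\<forall>y\<in>set ys. lev y \<le> c"
  shows "lev (weak_rule (filt c ys)) \<le> lev (weak_rule ys)"
proof (cases "\<exists>y0\<in>set ys. lev y0 = c")
  case False
  then have "filt c ys = ys" by (auto simp: filt_def)
  then show ?thesis by simp
next
  case True
  then obtain y0 where y0: "y0 \<in> set ys" "lev y0 = c" by blast
  have ne: "ys \<noteq> []" using y0 by auto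
  show ?thesis
  proof (cases "fulfills_assoc ys")
    case False
    let ?a = "Max (set ys)"
    have eq: "?a = negL (Min (set ys))" using False by (auto simp: fulfills_assoc_def)
    have "lev y0 \<le> lev ?a" using levels_bounded[OF L ne eq y0(1)] .
    moreover have "lev ?a \<le> c" using B Max_in[of "set ys"] ne by auto
    ultimately have "lev ?a = c" using y0 by simp
    then have "weak_rule ys = weak_rule (filt c ys)"
      using weak_nonassoc[OF False] L0[OF L, of ?a] by simp
    then show ?thesis by simp
  next
    case T: True
    have wb: "weak_rule ys = bigsmax ys" using weak_assoc[OF T] .
    from dom_cases[OF L B y0] show ?thesis
    proof
      assume "\<exists>x\<in>set ys. dom x (set ys)"
      then obtain x where x: "x \<in> set ys" "dom x (set ys)" by blast
      have "bigsmax ys = x" unfolding bigsmax_def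
        by (rule foldr_dom[OF x(1) subset_refl _ L x(2)]) (use x L in auto)
      moreover have "lev x = c" using x y0 B by (auto simp: dom_def intro: antisym)
      moreover have "lev (weak_rule (filt c ys)) \<le> c"
        by (rule lev_weak_le) (use B in \<open>auto simp: filt_def\<close>)
      ultimately show ?thesis using wb by simp
    next
      assume "c \<noteq> bot \<and> Pos c \<in> set ys \<and> Neg c \<in> set ys"
      then have "set ys = {Pos c, Neg c}" using both_MaxMin[OF B] T by auto
      then have "filt c ys = []" by (auto simp: filt_def filter_empty_conv)
      then show ?thesis by (simp add: weak_nil)
    qed
  qed
qed

lemma weak_strong:
  fixes xs :: "'a::{linorder,order_bot} sym list"
  shows "set xs \<subseteq> Lcar \<Longrightarrow> lev (weak_rule xs) \<le> lev (strong_rule xs)"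
proof (induction xs rule: strong_rule.induct)
  case (1 xs)
  show ?case
  proof (cases "fulfills_assoc xs")
    case True
    then show ?thesis by (simp add: weak_assoc strong_assoc)
  next
    case False
    let ?a = "Max (set xs)"
    let ?ys = "remove1 (negL ?a) (remove1 ?a xs)"
    have ne: "xs \<noteq> []" using nonassoc_nonempty[OF False] .
    have eq: "?a = negL (Min (set xs))" using False by (auto simp: fulfills_assoc_def)
    have yL: "set ?ys \<subseteq> Lcar" using 1(2) set_remove1_subset
      by (meson order_trans)
    have IH: "lev (weak_rule ?ys) \<le> lev (strong_rule ?ys)" using 1(1)[OF False refl yL] .
    have bnd: "\<forall>y\<in>set xs. lev y \<le> lev ?a" using levels_bounded[OF 1(2) ne eq] by blast
    have bnd': "\<forall>y\<in>set ?ys. lev y \<le> lev ?a"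
      using bnd set_remove1_subset by (meson subsetD)
    have f: "filt (lev ?a) ?ys = filt (lev ?a) xs"
      by (simp add: filt_remove1 lev_negL)
    have "weak_rule xs = weak_rule (filt (lev ?a) xs)"
      using weak_nonassoc[OF False] L0[OF 1(2), of ?a] by simp
    also have "\<dots> = weak_rule (filt (lev ?a) ?ys)" using f by simp
    finally have "lev (weak_rule xs) \<le> lev (weak_rule ?ys)"
      using W2[OF yL bnd'] by simp
    then show ?thesis using IH strong_nonassoc[OF False] by simp
  qed
qed

lemma leaves_ne: "leaves t \<noteq> []"
  by (induction t) auto

lemma len1: "length (leaves t) = 1 \<Longrightarrow> \<exists>u. t = Leaf u"
proof (cases t)
  case (Node l r)
  assume "length (leaves t) = 1"
  then have "length (leaves l) + length (leaves r) = 1" using Node by simp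
  moreover have "length (leaves l) \<noteq> 0" "length (leaves r) \<noteq> 0" using leaves_ne by auto
  ultimately show ?thesis by linarith
qed simp

lemma len2: "length (leaves t) = 2 \<Longrightarrow> \<exists>u v. t = Node (Leaf u) (Leaf v)"
proof (cases t)
  case (Node l r)
  assume "length (leaves t) = 2"
  then have "length (leaves l) + length (leaves r) = 2" using Node by simp
  moreover have "length (leaves l) \<noteq> 0" "length (leaves r) \<noteq> 0" using leaves_ne by auto
  ultimately have "length (leaves l) = 1" "length (leaves r) = 1" by linarith+
  then show ?thesis using Node len1 by blast
qed simp

lemma pair_zero:
  fixes u v :: "'a::{linorder,order_bot} sym"
  assumes "c \<noteq> bot" "set [u, v] = {Pos c, Neg c}"
  shows "smax u v = zeroL \<and> smax u (smax v zeroL) = zeroL"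
proof -
  have "(u = Pos c \<and> v = Neg c) \<or> (u = Neg c \<and> v = Pos c)"
    using assms(2) by (auto simp: doubleton_eq_iff)
  moreover have "smax (Pos c) (Neg c) = zeroL" "smax (Neg c) (Pos c) = zeroL"
    "smax (Neg c) zeroL = Neg c" "smax (Pos c) zeroL = Pos c"
    using assms(1) by (simp_all add: smax_def less_eq_sym_def)
  ultimately show ?thesis by auto
qed

lemma assoc_bracket:
  fixes xs :: "'a::{linorder,order_bot} sym list"
  assumes L: "set xs \<subseteq> Lcar" and A: "fulfills_assoc xs" and v: "w \<in> bracket_values xs"
  shows "w = bigsmax xs"
proof (cases "xs = []")
  case True
  then show ?thesis using v leaves_ne by (auto simp: bracket_values_def bigsmax_def)
next
  case False
  then obtain t where t: "mset (leaves t) = mset xs" "w = evalT t"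
    using v by (auto simp: bracket_values_def)
  have st: "set (leaves t) = set xs" using t(1) by (metis set_mset_mset)
  define c where "c = Max (lev ` set xs)"
  have B: "\<forall>y\<in>set xs. lev y \<le> c" unfolding c_def by simp
  have "c \<in> lev ` set xs" unfolding c_def using False by (intro Max_in) auto
  then obtain y0 where y0: "y0 \<in> set xs" "lev y0 = c" by blast
  from dom_cases[OF L B y0] show ?thesis
  proof
    assume "\<exists>x\<in>set xs. dom x (set xs)"
    then obtain x where x: "x \<in> set xs" "dom x (set xs)" by blast
    have xL: "x \<in> Lcar" using x L by auto
    have "bigsmax xs = x" unfolding bigsmax_def
      by (rule foldr_dom[OF x(1) subset_refl xL L x(2)])
    moreover have "evalT t = x"
      by (rule tree_dom[OF _ _ xL L x(2)]) (use st x in auto)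
    ultimately show ?thesis using t by simp
  next
    assume bo: "c \<noteq> bot \<and> Pos c \<in> set xs \<and> Neg c \<in> set xs"
    then have sx: "set xs = {Pos c, Neg c}" "length xs = 2" using both_MaxMin[OF B] A by auto
    have "length (leaves t) = 2" using t(1) sx(2) by (metis size_mset)
    then obtain u v where tuv: "t = Node (Leaf u) (Leaf v)" using len2 by blast
    have "\<exists>p q. xs = [p, q]" using sx(2) by (auto simp: numeral_2_eq_2 length_Suc_conv)
    then obtain p q where xs: "xs = [p, q]" by blast
    have "set [u, v] = {Pos c, Neg c}" using st tuv sx by simp
    then have "evalT t = zeroL" using pair_zero[of c u v] bo tuv by simp
    moreover have "bigsmax xs = zeroL" using pair_zero[of c p q] bo sx xs
      by (simp add: bigsmax_def)
    ultimately show ?thesis using t by simp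
  qed
qed

lemma zero_le_abs: "(zeroL :: 'a::{linorder,order_bot} sym) \<le> absL x"
  by (cases x) (auto simp: less_eq_sym_def)

lemma lev_zero: "lev (zeroL :: 'a::{linorder,order_bot} sym) \<le> lev x"
  by simp

theorem corollary1:
  fixes dummy :: "'a::{linorder,order_bot,order_top}"
  shows "(\<forall>xs :: 'a sym list. set xs \<subseteq> Lcar \<longrightarrow>
            absL (weak_rule xs) \<le> absL (strong_rule xs) \<and>
            absL (split_rule xs) \<le> absL (weak_rule xs) \<and>
            (\<forall>R. comp_rule R \<longrightarrow> absL (split_rule xs) \<le> absL (rule_value R xs)))
       \<and> cancelling_set (strong_rule :: 'a sym list \<Rightarrow> 'a sym) \<subseteq> cancelling_set weak_rule
       \<and> cancelling_set (weak_rule :: 'a sym list \<Rightarrow> 'a sym) \<subseteq> cancelling_set split_rule"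
proof (intro conjI allI impI subsetI)
  fix xs :: "'a sym list" assume L: "set xs \<subseteq> Lcar"
  show "absL (weak_rule xs) \<le> absL (strong_rule xs)"
    using weak_strong[OF L] by (simp add: abs_le_lev)
  show "absL (split_rule xs) \<le> absL (weak_rule xs)"
    by (cases "fulfills_assoc xs") (simp_all add: split_rule_def weak_assoc zero_le_abs)
  fix R :: "'a sym list \<Rightarrow> nat set" assume R: "comp_rule R"
  show "absL (split_rule xs) \<le> absL (rule_value R xs)"
  proof (cases "fulfills_assoc xs")
    case True
    have "rule_value R xs \<in> bracket_values xs"
      using R L by (simp add: comp_rule_def rule_value_def)
    then have "rule_value R xs = bigsmax xs" using assoc_bracket[OF L True] by simp
    then show ?thesis using True by (simp add: split_rule_def)
  qed (simp add: split_rule_def zero_le_abs)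
next
  fix xs :: "'a sym list" assume "xs \<in> cancelling_set strong_rule"
  then have L: "set xs \<subseteq> Lcar" and z: "strong_rule xs = zeroL" by (auto simp: cancelling_set_def)
  have "lev (weak_rule xs) \<le> bot" using weak_strong[OF L] z by simp
  moreover have "weak_rule xs \<in> Lcar" using weak_in[of xs] L by (auto simp: Lcar_iff)
  ultimately have "weak_rule xs = zeroL" using lev_bot by (metis bot.extremum_uniqueI)
  then show "xs \<in> cancelling_set weak_rule" using L by (simp add: cancelling_set_def)
next
  fix xs :: "'a sym list" assume "xs \<in> cancelling_set weak_rule"
  then have L: "set xs \<subseteq> Lcar" and z: "weak_rule xs = zeroL" by (auto simp: cancelling_set_def)
  have "split_rule xs = zeroL"
    using z by (cases "fulfills_assoc xs") (simp_all add: split_rule_def weak_assoc)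
  then show "xs \<in> cancelling_set split_rule" using L by (simp add: cancelling_set_def)
qed

end
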